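(* For every positive integer $m$, $$\sum_{k\ge 0}(-1)^k\binom{2m}{m+3k}=3^{m-1}+\frac12\binom{2m}{m},$$ where binomial coefficients $\binom{2m}{j}$ with $j>2m$ are zero. *)

theory Defs
  imports Complex_Main
begin

end

theory Submission
  imports Defs
begin

definition zz :: complex where "zz = Complex (1/2) (sqrt 3 / 2)"

definition W :: "nat \<Rightarrow> real" where
  "W n = (if n mod 6 = 0 then 1 else if n mod 6 = 3 then -1 else 0)"

lemma zz2: "zz^2 = zz - 1"
  by (simp add: zz_def complex_eq_iff power2_eq_square field_simps)

lemma zz3: "zz^3 = -1"
proof -
  have "zz^3 = zz * zz^2" by (simp add: power3_eq_cube power2_eq_square)
  also have "\<dots> = zz * (zz - 1)" by (simp add: zz2)
  also have "\<dots> = zz^2 - zz" by (simp add: power2_eq_square algebra_simps)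
  also have "\<dots> = -1" by (simp add: zz2)
  finally show ?thesis .
qed

lemma zz6: "zz^6 = 1"
proof -
  have "zz^6 = (zz^3)^2" by (simp flip: power_mult)
  thus ?thesis by (simp add: zz3)
qed

lemma zz_pow_mod: "zz^n = zz^(n mod 6)"
proof -
  have "zz^n = zz^(6 * (n div 6) + n mod 6)" by (metis div_mult_mod_eq mult.commute)
  also have "\<dots> = (zz^6)^(n div 6) * zz^(n mod 6)" by (simp only: power_add power_mult)
  finally show ?thesis by (simp add: zz6)
qed

lemma neg1_pow_mod: "(-1::real)^n = (-1)^(n mod 6)"
proof -
  have "(-1::real)^n = (-1)^(6 * (n div 6) + n mod 6)" by (metis div_mult_mod_eq mult.commute)
  also have "\<dots> = ((-1)^6)^(n div 6) * (-1::real)^(n mod 6)" by (simp only: power_add power_mult)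
  finally show ?thesis by simp
qed

lemma W_eq: "W n = (2 * Re (zz^n) + (-1)^n) / 3"
proof -
  have z4: "zz^4 = - zz"
  proof -
    have "zz^4 = zz * zz^3" by (simp flip: power_Suc)
    thus ?thesis by (simp add: zz3)
  qed
  have z5: "zz^5 = 1 - zz"
  proof -
    have "zz^5 = zz^2 * zz^3" by (simp flip: power_add)
    thus ?thesis by (simp add: zz2 zz3)
  qed
  have r: "n mod 6 < 6" by simp
  define r where "r = n mod 6"
  have "r < 6" using r r_def by simp
  hence "r = 0 \<or> r = 1 \<or> r = 2 \<or> r = 3 \<or> r = 4 \<or> r = 5" by auto
  moreover have "W n = (if r = 0 then 1 else if r = 3 then -1 else 0)" by (simp add: W_def r_def)
  moreover have "Re (zz^n) = Re (zz^r)" by (simp add: r_def zz_pow_mod[of n])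
  moreover have "(-1::real)^n = (-1)^r" by (simp add: r_def neg1_pow_mod[of n])
  ultimately show ?thesis
    using zz2 zz3 z4 z5 by (auto simp: zz_def)
qed

lemma main_sum:
  assumes "m \<ge> 1"
  shows "(\<Sum>j\<le>2*m. real ((2*m) choose j) * W (j + 5*m)) = 2 * 3^(m-1)"
proof -
  have b1: "(zz + 1)^(2*m) = (\<Sum>j\<le>2*m. of_nat ((2*m) choose j) * zz^j)"
    using binomial_ring[of zz 1 "2*m"] by simp
  have "(zz + 1)^(2*m) = ((zz+1)^2)^m" by (simp add: power_mult)
  also have "(zz+1)^2 = 3 * zz" by (simp add: power2_eq_square algebra_simps zz2[unfolded power2_eq_square])
  finally have "(zz + 1)^(2*m) = 3^m * zz^m" by (simp add: power_mult_distrib)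
  hence c1: "(\<Sum>j\<le>2*m. of_nat ((2*m) choose j) * zz^(j + 5*m)) = 3^m"
  proof -
    assume h: "(zz + 1)^(2*m) = 3^m * zz^m"
    have "(\<Sum>j\<le>2*m. of_nat ((2*m) choose j) * zz^(j + 5*m)) = zz^(5*m) * (zz+1)^(2*m)"
      unfolding b1 sum_distrib_left by (rule sum.cong) (auto simp: power_add)
    also have "\<dots> = 3^m * zz^(6*m)" by (simp only: h) (simp add: mult.left_commute flip: power_add)
    also have "zz^(6*m) = 1" by (simp add: power_mult zz6)
    finally show ?thesis by simp
  qed
  have c1r: "(\<Sum>j\<le>2*m. real ((2*m) choose j) * Re (zz^(j + 5*m))) = 3^m"
    using arg_cong[OF c1, of Re] by simp
  have b2: "((-1::real) + 1)^(2*m) = (\<Sum>j\<le>2*m. of_nat ((2*m) choose j) * (-1)^j)"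
    using binomial_ring[of "-1::real" 1 "2*m"] by simp
  have c2: "(\<Sum>j\<le>2*m. real ((2*m) choose j) * (-1)^(j + 5*m)) = 0"
  proof -
    have "(\<Sum>j\<le>2*m. real ((2*m) choose j) * (-1)^(j + 5*m)) = (-1)^(5*m) * ((-1::real) + 1)^(2*m)"
      unfolding b2 sum_distrib_left by (rule sum.cong) (auto simp: power_add)
    thus ?thesis using assms by simp
  qed
  have "(\<Sum>j\<le>2*m. real ((2*m) choose j) * W (j + 5*m))
      = (2 * (\<Sum>j\<le>2*m. real ((2*m) choose j) * Re (zz^(j + 5*m))) + (\<Sum>j\<le>2*m. real ((2*m) choose j) * (-1)^(j + 5*m))) / 3"
    by (simp add: W_eq sum_divide_distrib sum_distrib_left sum.distrib algebra_simps add_divide_distrib)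
  also have "\<dots> = 2 * 3^m / 3" by (simp add: c1r c2)
  also have "\<dots> = 2 * 3^(m-1)" using assms by (cases m) auto
  finally show ?thesis .
qed

lemma small: "x<6 \<Longrightarrow> y<6 \<Longrightarrow> (x+y) mod 6 = 0 \<Longrightarrow> x+y=0 \<or> x+y=(6::nat)"
  by presburger
lemma aux: "s \<le> 6*(a::nat) \<Longrightarrow> ((6*a - s) mod 6 = 0 \<longleftrightarrow> s mod 6 = 0) \<and> ((6*a - s) mod 6 = 3 \<longleftrightarrow> s mod 6 = 3)"
proof -
  assume h: "s \<le> 6*a"
  define n where "n = 6*a - s"
  have "n + s = 6*a" using h n_def by simp
  hence "(n mod 6 + s mod 6) mod 6 = 0" by (metis mod_add_eq mod_mult_self1_is_0)
  moreover have "n mod 6 < 6" "s mod 6 < 6" by auto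
  ultimately have "n mod 6 + s mod 6 = 0 \<or> n mod 6 + s mod 6 = 6"
    using small[of "n mod 6" "s mod 6"] by (metis (no_types))
  thus ?thesis unfolding n_def[symmetric] by auto
qed

lemma W_neg: "s \<le> 6*a \<Longrightarrow> W (6*a - s) = W s"
  using aux[of s a] unfolding W_def by simp

lemma W_shift: "W (t + 6*a) = W t"
  unfolding W_def by simp

lemma W31: "W (3*k+1) = 0"
proof -
  have "(3*k+1) mod 6 \<noteq> 0 \<and> (3*k+1) mod 6 \<noteq> 3" by presburger
  thus ?thesis unfolding W_def by simp
qed
lemma W32: "W (3*k+2) = 0"
proof -
  have "(3*k+2) mod 6 \<noteq> 0 \<and> (3*k+2) mod 6 \<noteq> 3" by presburger
  thus ?thesis unfolding W_def by simp
qed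
lemma W3: "W (3*k) = (-1)^k"
proof (cases "even k")
  case True
  hence "(3*k) mod 6 = 0" by presburger
  thus ?thesis using True unfolding W_def by simp
next
  case False
  hence "(3*k) mod 6 = 3" by presburger
  thus ?thesis using False unfolding W_def by simp
qed

lemma group3: "(\<Sum>t<3*n. h t) = (\<Sum>k<n. h (3*k) + h (3*k+1) + h (3*k+2))"
  for h :: "nat \<Rightarrow> real"
proof (induction n)
  case 0 then show ?case by simp
next
  case (Suc n)
  have e: "3 * Suc n = Suc (Suc (Suc (3*n)))" by simp
  have "(\<Sum>t<3 * Suc n. h t) = (\<Sum>t<3*n. h t) + (h (3*n) + h (3*n+1) + h (3*n+2))"
    unfolding e by simp
  then show ?case using Suc by simp
qed

lemma shift_sum: "(\<Sum>i<n. g (Suc i)) = (\<Sum>t\<le>n. g t) - g 0"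
  for g :: "nat \<Rightarrow> real"
  by (induction n) auto

lemma split_sum: "(\<Sum>j\<le>2*m. f j) = (\<Sum>i<m. f (m - Suc i)) + (\<Sum>t\<le>m. f (m+t))"
  for f :: "nat \<Rightarrow> real"
proof -
  have e: "{..2*m} = {..<m} \<union> (\<lambda>t. m+t) ` {..m}"
  proof (intro equalityI subsetI)
    fix x assume "x \<in> {..2*m}"
    thus "x \<in> {..<m} \<union> (\<lambda>t. m+t) ` {..m}"
      by (cases "x < m") (auto simp: image_iff intro!: bexI[of _ "x - m"])
  qed auto
  have "(\<Sum>j\<le>2*m. f j) = (\<Sum>j<m. f j) + (\<Sum>j\<in>(\<lambda>t. m+t) ` {..m}. f j)"
    unfolding e by (rule sum.union_disjoint) auto
  also have "(\<Sum>j\<in>(\<lambda>t. m+t) ` {..m}. f j) = (\<Sum>t\<le>m. f (m+t))"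
    by (subst sum.reindex) auto
  also have "(\<Sum>j<m. f j) = (\<Sum>i<m. f (m - Suc i))"
    by (rule sum.nat_diff_reindex[symmetric])
  finally show ?thesis .
qed

theorem lemma5:
  fixes m :: nat
  assumes "m \<ge> 1"
  shows "(\<Sum>k\<le>m. (-1::real) ^ k * real ((2*m) choose (m + 3*k)))
           = 3 ^ (m - 1) + real ((2*m) choose m) / 2"
proof -
  define h where "h t = real ((2*m) choose (m+t)) * W t" for t
  define U where "U = (\<Sum>t\<le>m. h t)"
  have upper: "(\<Sum>t\<le>m. real ((2*m) choose (m+t)) * W (m + t + 5*m)) = U"
    unfolding U_def h_def
    by (rule sum.cong) (auto simp: W_shift[of _ m, simplified] add.assoc add.commute add.left_commute)
  have lower: "(\<Sum>i<m. real ((2*m) choose (m - Suc i)) * W (m - Suc i + 5*m)) = U - h 0"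
  proof -
    have "(\<Sum>i<m. real ((2*m) choose (m - Suc i)) * W (m - Suc i + 5*m)) = (\<Sum>i<m. h (Suc i))"
    proof (rule sum.cong)
      fix i assume "i \<in> {..<m}"
      hence i: "i < m" by simp
      have "(2*m) choose (m - Suc i) = (2*m) choose (2*m - (m - Suc i))"
        using i by (subst binomial_symmetric) auto
      also have "2*m - (m - Suc i) = m + Suc i" using i by simp
      finally have c: "(2*m) choose (m - Suc i) = (2*m) choose (m + Suc i)" .
      have "m - Suc i + 5*m = 6*m - Suc i" using i by simp
      hence "W (m - Suc i + 5*m) = W (Suc i)" using i W_neg[of "Suc i" m] by simp
      thus "real ((2*m) choose (m - Suc i)) * W (m - Suc i + 5*m) = h (Suc i)"
        unfolding h_def c by simp
    qed simp
    also have "\<dots> = U - h 0" unfolding U_def by (rule shift_sum)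
    finally show ?thesis .
  qed
  have h0: "h 0 = real ((2*m) choose m)" unfolding h_def by (simp add: W_def)
  have tot: "2 * 3^(m-1) = 2*U - real ((2*m) choose m)"
    using main_sum[OF assms] split_sum[of "\<lambda>j. real ((2*m) choose j) * W (j + 5*m)" m]
      upper lower h0 by simp
  have US: "U = (\<Sum>k\<le>m. (-1::real) ^ k * real ((2*m) choose (m + 3*k)))"
  proof -
    have "U = (\<Sum>t<3*(m+1). h t)"
      unfolding U_def
    proof (rule sum.mono_neutral_left)
      show "\<forall>i\<in>{..<3*(m+1)} - {..m}. h i = 0" by (auto simp: h_def)
    qed auto
    also have "\<dots> = (\<Sum>k<m+1. h (3*k) + h (3*k+1) + h (3*k+2))" by (rule group3)
    also have "\<dots> = (\<Sum>k<m+1. (-1::real) ^ k * real ((2*m) choose (m + 3*k)))"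
      by (rule sum.cong) (auto simp: h_def W3 W31[simplified] W32[simplified])
    also have "\<dots> = (\<Sum>k\<le>m. (-1::real) ^ k * real ((2*m) choose (m + 3*k)))"
      by (simp add: lessThan_Suc_atMost)
    finally show ?thesis .
  qed
  show ?thesis using tot US by simp
qed

end
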